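(* Assume the standing setting and let $u$ be an entropy solution of (E). Then for a.e. $(t,x)\in Q$, $$\min\Big\{\operatorname*{ess\,inf}_{\Omega}u_0,\ \operatorname*{ess\,inf}_{Q^c}u^c\Big\}\le u(t,x)\le\max\Big\{\operatorname*{ess\,sup}_{\Omega}u_0,\ \operatorname*{ess\,sup}_{Q^c}u^c\Big\}.$$
   Context: Standing setting. Let $d\ge1$, $T>0$. $\Omega\subset\mathbb{R}^d$ is open, bounded, with $C^2$ boundary; $\sigma$ denotes $(d-1)$-dimensional Hausdorff measure on $\partial\Omega$. Set $Q=(0,T)\times\Omega$, $\Omega^c=\mathbb{R}^d\setminus\Omega$, $Q^c=(0,T)\times\Omega^c$, $\Gamma=(0,T)\times\partial\Omega$, $M=(0,T)\times\mathbb{R}^d$. Data: $f\in W^{1,\infty}_{loc}(\mathbb{R};\mathbb{R}^d)$; $b\in W^{1,\infty}_{loc}(\mathbb{R};\mathbb{R})$ nondecreasing, with $b'$ of locally bounded variation; $u^c\in C^2\cap L^\infty(Q^c)$ with a fixed extension $\bar u^c\in C^2\cap L^\infty([0,T]\times\mathbb{R}^d)$; $u_0\in L^\infty(\Omega)$; $\mu$ a symmetric nonnegative Radon measure on $\mathbb{R}^d\setminus\{0\}$ with $\int(|z|^2\wedge1)\,d\mu<\infty$. $L_f$ is a fixed Lipschitz constant of $f$ on a bounded interval containing the essential ranges of $u_0$, $\bar u^c$ and the solutions considered. Operators: $\mathcal L^{\ge r}[\phi](x)=\int_{|z|\ge r}(\phi(x+z)-\phi(x))\,d\mu(z)$ for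 bounded Borel $\phi$; $\mathcal L^{<r}[\phi](x)=\lim_{\epsilon\to0}\int_{\epsilon<|z|<r}(\phi(x+z)-\phi(x))\,d\mu(z)$ for $\phi\in C^2_c$; they act in $x$ on functions of $(t,x)$. Notation: $a^\pm$ positive/negative parts; $\mathrm{sgn}^\pm(a)=\pm1$ if $\pm a>0$, else $0$; $F^\pm(u,k)=\mathrm{sgn}^\pm(u-k)(f(u)-f(k))$. Problem (E): $\partial_tu+\mathrm{div}(f(u))=\mathcal L[b(u)]$ in $Q$, $u=u^c$ in $Q^c$, $u(0,\cdot)=u_0$. Definition (entropy solution). A Borel $u\in L^\infty(M)$ is an entropy solution of (E) if: (a) for all $r>0$, $k\in\mathbb{R}$, $0\le\varphi\in C^\infty_c([0,T)\times\mathbb{R}^d)$ and sign $\pm$ with $(b(u^c)-b(k))^\pm\varphi=0$ a.e. in $Q^c$, $$-\int_Q\big((u-k)^\pm\partial_t\varphi+F^\pm(u,k)\cdot\nabla\varphi\big)-\int_Q\mathcal L^{\ge r}[b(u)]\mathrm{sgn}^\pm(u-k)\varphi-\int_M(b(u)-b(k))^\pm\mathcal L^{<r}[\varphi]\le\int_\Omega(u_0-k)^\pm\varphi(0,\cdot)\,dx+L_f\int_\Gamma(\bar u^c-k)^\pm\varphi\,d\sigma\,dt;$$ (b) $u=u^c$ a.e. in $Q^c$. *)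

theory Defs
  imports "HOL-Analysis.Analysis"
begin

coinductive smooth_fun :: "('a::real_normed_vector \<Rightarrow> real) \<Rightarrow> bool" where
  "(\<And>x. (f has_derivative f' x) (at x)) \<Longrightarrow> (\<And>v. smooth_fun (\<lambda>x. f' x v)) \<Longrightarrow> smooth_fun f"

definition C2_on :: "'a::real_normed_vector set \<Rightarrow> ('a \<Rightarrow> real) \<Rightarrow> bool" where
  "C2_on U g \<longleftrightarrow> (\<exists>(D :: 'a \<Rightarrow> ('a \<Rightarrow>\<^sub>L real)) (D2 :: 'a \<Rightarrow> ('a \<Rightarrow>\<^sub>L ('a \<Rightarrow>\<^sub>L real))).
     (\<forall>x\<in>U. (g has_derivative blinfun_apply (D x)) (at x) \<and>
             (D has_derivative blinfun_apply (D2 x)) (at x)) \<and> continuous_on U D2)"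

definition C2_boundary :: "'a::euclidean_space set \<Rightarrow> bool" where
  "C2_boundary \<Omega> \<longleftrightarrow> (\<forall>p\<in>frontier \<Omega>. \<exists>U \<rho>. open U \<and> p \<in> U \<and> C2_on U \<rho> \<and>
      (\<forall>x\<in>U. x \<in> \<Omega> \<longleftrightarrow> \<rho> x < 0) \<and> frechet_derivative \<rho> (at p) \<noteq> (\<lambda>h. 0))"

text \<open>W^{1,infinity}_loc(R) = locally Lipschitz.\<close>
definition loc_lipschitz :: "(real \<Rightarrow> 'b::metric_space) \<Rightarrow> bool" where
  "loc_lipschitz g \<longleftrightarrow> (\<forall>a c. \<exists>L. lipschitz_on L {a..c} g)"

definition loc_bounded_variation :: "(real \<Rightarrow> real) \<Rightarrow> bool" where
  "loc_bounded_variation g \<longleftrightarrow> (\<forall>a c. \<exists>V. \<forall>(n::nat) (xs :: nat \<Rightarrow> real).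
      (\<forall>i\<le>n. xs i \<in> {a..c}) \<and> (\<forall>i<n. xs i \<le> xs (Suc i)) \<longrightarrow>
      (\<Sum>i<n. \<bar>g (xs (Suc i)) - g (xs i)\<bar>) \<le> V)"

text \<open>b' (the a.e. derivative of the locally Lipschitz b) has a representative of locally
bounded variation.\<close>
definition deriv_loc_bv :: "(real \<Rightarrow> real) \<Rightarrow> bool" where
  "deriv_loc_bv b \<longleftrightarrow> (\<exists>g. (\<forall>x y. x \<le> y \<longrightarrow> (g has_integral (b y - b x)) {x..y}) \<and>
      loc_bounded_variation g)"

definition unit_ball_vol :: "nat \<Rightarrow> real" where
  "unit_ball_vol s = pi powr (real s / 2) / Gamma (real s / 2 + 1)"

definition hausdorff_outer :: "nat \<Rightarrow> 'a::metric_space set \<Rightarrow> ennreal" where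
  "hausdorff_outer s A = (SUP \<delta>\<in>{0<..}. INF C\<in>{C :: nat \<Rightarrow> 'a set.
       A \<subseteq> (\<Union>i. C i) \<and> (\<forall>i. bounded (C i) \<and> diameter (C i) \<le> \<delta>)}.
       (\<Sum>i. ennreal (if C i = {} then 0
                        else unit_ball_vol s / 2 ^ s * diameter (C i) ^ s)))"

definition surface_measure :: "'a::euclidean_space set \<Rightarrow> 'a measure" where
  "surface_measure \<Omega> = measure_of (frontier \<Omega>) {B \<inter> frontier \<Omega> | B. B \<in> sets borel}
      (hausdorff_outer (DIM('a) - 1))"

definition ess_sup_on :: "'a::euclidean_space set \<Rightarrow> ('a \<Rightarrow> real) \<Rightarrow> ereal" where
  "ess_sup_on A g = Inf {z. AE x in lebesgue. x \<in> A \<longrightarrow> ereal (g x) \<le> z}"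

definition ess_inf_on :: "'a::euclidean_space set \<Rightarrow> ('a \<Rightarrow> real) \<Rightarrow> ereal" where
  "ess_inf_on A g = Sup {z. AE x in lebesgue. x \<in> A \<longrightarrow> z \<le> ereal (g x)}"

section \<open>Signs, parts, fluxes (pos = True is the + case, pos = False the - case)\<close>

definition ppart :: "bool \<Rightarrow> real \<Rightarrow> real" where
  "ppart pos a = (if pos then max a 0 else max (- a) 0)"

definition sgnpm :: "bool \<Rightarrow> real \<Rightarrow> real" where
  "sgnpm pos a = (if pos then (if a > 0 then 1 else 0) else (if a < 0 then -1 else 0))"

definition Fpm :: "bool \<Rightarrow> (real \<Rightarrow> 'a::real_vector) \<Rightarrow> real \<Rightarrow> real \<Rightarrow> 'a" where
  "Fpm pos f v k = sgnpm pos (v - k) *\<^sub>R (f v - f k)"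

definition cylQ :: "real \<Rightarrow> 'a set \<Rightarrow> (real \<times> 'a) set" where
  "cylQ T \<Omega> = {p. 0 < fst p \<and> fst p < T \<and> snd p \<in> \<Omega>}"

definition cylQc :: "real \<Rightarrow> 'a set \<Rightarrow> (real \<times> 'a) set" where
  "cylQc T \<Omega> = {p. 0 < fst p \<and> fst p < T \<and> snd p \<notin> \<Omega>}"

definition cylM :: "real \<Rightarrow> (real \<times> 'a) set" where
  "cylM T = {p. 0 < fst p \<and> fst p < T}"

definition Lge :: "'a::euclidean_space measure \<Rightarrow> real \<Rightarrow> ('a \<Rightarrow> real) \<Rightarrow> 'a \<Rightarrow> real" where
  "Lge \<mu> r \<phi> x = (LINT z:{z. r \<le> norm z}|\<mu>. \<phi> (x + z) - \<phi> x)"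

definition Llt :: "'a::euclidean_space measure \<Rightarrow> real \<Rightarrow> ('a \<Rightarrow> real) \<Rightarrow> 'a \<Rightarrow> real" where
  "Llt \<mu> r \<phi> x = Lim (at_right 0)
      (\<lambda>\<epsilon>. LINT z:{z. \<epsilon> < norm z \<and> norm z < r}|\<mu>. \<phi> (x + z) - \<phi> x)"

definition test_fn :: "real \<Rightarrow> (real \<times> 'a::euclidean_space \<Rightarrow> real) \<Rightarrow> bool" where
  "test_fn T \<phi> \<longleftrightarrow> smooth_fun \<phi> \<and> compact (closure {p. \<phi> p \<noteq> 0}) \<and>
     closure {p. \<phi> p \<noteq> 0} \<subseteq> {p. fst p < T} \<and>
     (\<forall>p. 0 \<le> fst p \<longrightarrow> fst p < T \<longrightarrow> 0 \<le> \<phi> p)"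

definition entropy_solution ::
  "'a::euclidean_space set \<Rightarrow> real \<Rightarrow> (real \<Rightarrow> 'a) \<Rightarrow> (real \<Rightarrow> real) \<Rightarrow> 'a measure \<Rightarrow>
   (real \<times> 'a \<Rightarrow> real) \<Rightarrow> ('a \<Rightarrow> real) \<Rightarrow> real \<Rightarrow> (real \<times> 'a \<Rightarrow> real) \<Rightarrow> bool" where
  "entropy_solution \<Omega> T f b \<mu> uc u0 Lf u \<longleftrightarrow>
     u \<in> borel_measurable borel \<and>
     (\<exists>C. AE p in lebesgue. p \<in> cylM T \<longrightarrow> \<bar>u p\<bar> \<le> C) \<and>
     (\<forall>r>0. \<forall>k. \<forall>\<phi>. \<forall>pos.
        test_fn T \<phi> \<and>
        (AE p in lebesgue. p \<in> cylQc T \<Omega> \<longrightarrow> ppart pos (b (uc p) - b k) * \<phi> p = 0) \<longrightarrow>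
        - (LINT p:cylQ T \<Omega>|lebesgue.
              ppart pos (u p - k) * frechet_derivative \<phi> (at p) (1, 0)
            + frechet_derivative \<phi> (at p) (0, Fpm pos f (u p) k))
        - (LINT p:cylQ T \<Omega>|lebesgue.
              Lge \<mu> r (\<lambda>y. b (u (fst p, y))) (snd p) * sgnpm pos (u p - k) * \<phi> p)
        - (LINT p:cylM T|lebesgue.
              ppart pos (b (u p) - b k) * Llt \<mu> r (\<lambda>y. \<phi> (fst p, y)) (snd p))
        \<le> (LINT x:\<Omega>|lebesgue. ppart pos (u0 x - k) * \<phi> (0, x))
          + Lf * (LINT t:{0<..<T}|lborel.
                    (LINT x|surface_measure \<Omega>. ppart pos (uc (t, x) - k) * \<phi> (t, x)))) \<and>
     (AE p in lebesgue. p \<in> cylQc T \<Omega> \<longrightarrow> u p = uc p)"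

end

theory Submission
  imports Defs "HOL-Computational_Algebra.Polynomial"
begin


definition EP :: "real poly \<Rightarrow> real \<Rightarrow> real" where
  "EP P t = (if 0 < t then poly P (inverse t) * exp (- inverse t) else 0)"

definition dEP :: "real poly \<Rightarrow> real poly" where
  "dEP P = (P - pderiv P) * [:0,0,1:]"

lemma poly_exp_at_top: "((\<lambda>y. poly Q y * exp (- y)) \<longlongrightarrow> (0::real)) at_top"
proof -
  have "((\<lambda>y. \<Sum>i\<le>degree Q. coeff Q i * (y ^ i / exp y)) \<longlongrightarrow> (\<Sum>i\<le>degree Q. coeff Q i * 0)) at_top"
    by (intro tendsto_sum tendsto_mult tendsto_const tendsto_power_div_exp_0)
  then show ?thesis
    by (simp add: poly_altdef sum_distrib_right exp_minus divide_inverse mult.assoc)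
qed

lemma EP_right0: "((\<lambda>h. poly Q (inverse h) * exp (- inverse h)) \<longlongrightarrow> (0::real)) (at_right 0)"
  using poly_exp_at_top[of Q] by (simp add: filterlim_at_right_to_top)

lemma EP_deriv: "(EP P has_real_derivative EP (dEP P) t) (at t)"
proof (cases "t > 0")
  case True
  have d1: "((\<lambda>t. poly P (inverse t)) has_real_derivative poly (pderiv P) (inverse t) * (- (inverse t ^ Suc (Suc 0)))) (at t)"
    by (rule DERIV_chain2[OF poly_DERIV DERIV_inverse]) (use True in simp)
  have d2: "((\<lambda>t. exp (- inverse t)) has_real_derivative exp (- inverse t) * (- (- (inverse t ^ Suc (Suc 0))))) (at t)"
    by (rule DERIV_chain2[OF DERIV_exp DERIV_minus[OF DERIV_inverse]]) (use True in simp)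
  have "((\<lambda>t. poly P (inverse t) * exp (- inverse t)) has_real_derivative
     (poly (pderiv P) (inverse t) * (- (inverse t ^ Suc (Suc 0)))) * exp (- inverse t) +
      exp (- inverse t) * (- (- (inverse t ^ Suc (Suc 0)))) * poly P (inverse t)) (at t)"
    by (rule DERIV_mult[OF d1 d2])
  moreover have "(poly (pderiv P) (inverse t) * (- (inverse t ^ Suc (Suc 0)))) * exp (- inverse t) +
      exp (- inverse t) * (- (- (inverse t ^ Suc (Suc 0)))) * poly P (inverse t) = EP (dEP P) t"
  proof -
    have pe: "poly ((P - pderiv P) * [:0,0,1:]) y = (poly P y - poly (pderiv P) y) * (y*y)" for y :: real
      by simp
    have "EP (dEP P) t = (poly P (inverse t) - poly (pderiv P) (inverse t)) * (inverse t * inverse t) * exp (- inverse t)"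
      using True unfolding EP_def dEP_def pe by simp
    moreover have "(a::real) * (- (y ^ Suc (Suc 0))) * e + e * (- (- (y ^ Suc (Suc 0)))) * c = (c - a) * (y*y) * e" for a y e c
      by (simp add: algebra_simps)
    ultimately show ?thesis by simp
  qed
  ultimately have "((\<lambda>t. poly P (inverse t) * exp (- inverse t)) has_real_derivative EP (dEP P) t) (at t)"
    by simp
  then show ?thesis
  proof (rule has_field_derivative_transform_within_open[where S="{0<..}"])
    show "open {0::real<..}" by simp
    show "t \<in> {0<..}" using True by simp
    show "\<And>x. x \<in> {0<..} \<Longrightarrow> poly P (inverse x) * exp (- inverse x) = EP P x" by (simp add: EP_def)
  qed
next
  case False
  show ?thesis
  proof (cases "t < 0")
    case True
    have e0: "EP (dEP P) t = 0" using True by (simp add: EP_def)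
    have "((\<lambda>_. 0) has_real_derivative 0) (at t)" by simp
    then have "(EP P has_real_derivative 0) (at t)"
    proof (rule has_field_derivative_transform_within_open[where S="{..<0}"])
      show "open {..<(0::real)}" by simp
      show "t \<in> {..<0}" using True by simp
      show "\<And>x. x \<in> {..<0} \<Longrightarrow> 0 = EP P x" by (simp add: EP_def)
    qed
    then show ?thesis using e0 by simp
  next
    case False
    with \<open>\<not> t > 0\<close> have t: "t = 0" by simp
    have "((\<lambda>h. (EP P (0 + h) - EP P 0) / h) \<longlongrightarrow> 0) (at 0)"
    proof (rule filterlim_split_at)
      have evl: "eventually (\<lambda>h. h \<in> {-1<..<0}) (at_left (0::real))"
        by (rule eventually_at_left_real) simp
      have "eventually (\<lambda>h. (EP P (0 + h) - EP P 0) / h = 0) (at_left 0)"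
        by (rule eventually_mono[OF evl]) (simp add: EP_def)
      then show "((\<lambda>h. (EP P (0 + h) - EP P 0) / h) \<longlongrightarrow> 0) (at_left 0)"
        by (rule tendsto_eventually)
      have evr: "eventually (\<lambda>h. h \<in> {0<..<1}) (at_right (0::real))"
        by (rule eventually_at_right_real) simp
      have "((\<lambda>h. poly (P * [:0,1:]) (inverse h) * exp (- inverse h)) \<longlongrightarrow> 0) (at_right 0)"
        by (rule EP_right0)
      moreover have "eventually (\<lambda>h. poly (P * [:0,1:]) (inverse h) * exp (- inverse h) =
          (EP P (0 + h) - EP P 0) / h) (at_right 0)"
        by (rule eventually_mono[OF evr]) (simp add: EP_def divide_inverse ac_simps)
      ultimately show "((\<lambda>h. (EP P (0 + h) - EP P 0) / h) \<longlongrightarrow> 0) (at_right 0)"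
        by (rule Lim_transform_eventually)
    qed
    then show ?thesis unfolding t DERIV_def by (simp add: EP_def)
  qed
qed


inductive salg :: "('a::real_inner \<Rightarrow> real) \<Rightarrow> bool" where
  const: "salg (\<lambda>_. c)"
| lin: "bounded_linear l \<Longrightarrow> salg l"
| add: "salg f \<Longrightarrow> salg g \<Longrightarrow> salg (\<lambda>x. f x + g x)"
| mult: "salg f \<Longrightarrow> salg g \<Longrightarrow> salg (\<lambda>x. f x * g x)"
| ep: "salg f \<Longrightarrow> salg (\<lambda>x. EP P (f x))"
| inv: "salg f \<Longrightarrow> (\<forall>x. f x \<noteq> 0) \<Longrightarrow> salg (\<lambda>x. inverse (f x))"
| sq: "salg (\<lambda>x. inner x x)"

lemma salg_deriv:
  assumes "salg f"
  shows "\<exists>D. (\<forall>x. (f has_derivative D x) (at x)) \<and> (\<forall>v. salg (\<lambda>x. D x v))"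
  using assms
proof induction
  case (const c)
  show ?case by (rule exI[of _ "\<lambda>x v. 0"]) (auto intro: salg.const)
next
  case (lin l)
  show ?case by (rule exI[of _ "\<lambda>x. l"]) (auto intro: salg.const lin.hyps bounded_linear_imp_has_derivative)
next
  case (add f g)
  then obtain Df Dg where f: "\<forall>x. (f has_derivative Df x) (at x)" "\<forall>v. salg (\<lambda>x. Df x v)"
    and g: "\<forall>x. (g has_derivative Dg x) (at x)" "\<forall>v. salg (\<lambda>x. Dg x v)" by blast
  show ?case
    using f g by (intro exI[of _ "\<lambda>x v. Df x v + Dg x v"]) (auto intro!: has_derivative_add salg.add)
next
  case (mult f g)
  then obtain Df Dg where f: "\<forall>x. (f has_derivative Df x) (at x)" "\<forall>v. salg (\<lambda>x. Df x v)"
    and g: "\<forall>x. (g has_derivative Dg x) (at x)" "\<forall>v. salg (\<lambda>x. Dg x v)" by blast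
  show ?case
    using f g mult.hyps by (intro exI[of _ "\<lambda>x v. f x * Dg x v + Df x v * g x"])
       (auto intro!: has_derivative_mult salg.add salg.mult)
next
  case (ep f P)
  then obtain Df where f: "\<forall>x. (f has_derivative Df x) (at x)" "\<forall>v. salg (\<lambda>x. Df x v)" by blast
  have "((\<lambda>x. EP P (f x)) has_derivative (\<lambda>v. EP (dEP P) (f x) * Df x v)) (at x)" for x
  proof -
    have "(EP P has_derivative (\<lambda>h. EP (dEP P) (f x) * h)) (at (f x))"
      using EP_deriv[of P "f x"] by (simp add: has_field_derivative_imp_has_derivative)
    from has_derivative_compose[OF f(1)[rule_format, of x] this] show ?thesis
      by (simp add: o_def)
  qed
  then show ?case
    using f ep.hyps by (intro exI[of _ "\<lambda>x v. EP (dEP P) (f x) * Df x v"]) (auto intro!: salg.mult salg.ep)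
next
  case (inv f)
  then obtain Df where f: "\<forall>x. (f has_derivative Df x) (at x)" "\<forall>v. salg (\<lambda>x. Df x v)" by blast
  have "((\<lambda>x. inverse (f x)) has_derivative (\<lambda>v. - (inverse (f x) * Df x v * inverse (f x)))) (at x)" for x
    using inv.hyps(2) by (auto intro!: derivative_eq_intros f(1)[rule_format])
  moreover have "salg (\<lambda>x. (-1) * ((inverse (f x) * Df x v) * inverse (f x)))" for v
    by (intro salg.mult salg.const salg.inv inv.hyps f(2)[rule_format])
  ultimately show ?case
    by (intro exI[of _ "\<lambda>x v. - (inverse (f x) * Df x v * inverse (f x))"]) auto
next
  case sq
  have d: "((\<lambda>x. inner x x) has_derivative (\<lambda>v. inner x v + inner v x)) (at x)" for x :: 'a
    by (auto intro!: derivative_eq_intros)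
  have s: "salg (\<lambda>x::'a. inner x v + inner v x)" for v
    by (intro salg.add salg.lin bounded_linear_inner_left bounded_linear_inner_right)
  show ?case by (rule exI[of _ "\<lambda>x v. inner x v + inner v x"], intro conjI allI d s)
qed

lemma salg_smooth: "salg f \<Longrightarrow> smooth_fun f"
proof (coinduction arbitrary: f rule: smooth_fun.coinduct)
  case (smooth_fun f)
  then obtain D where "\<forall>x. (f has_derivative D x) (at x)" "\<forall>v. salg (\<lambda>x. D x v)"
    using salg_deriv by blast
  then show ?case by blast
qed

lemma salg_cont: "salg f \<Longrightarrow> continuous_on UNIV f"
  using salg_deriv[of f] by (metis continuous_at_imp_continuous_on has_derivative_continuous)


definition Stp :: "real \<Rightarrow> real" where
  "Stp s = EP 1 s * inverse (EP 1 s + EP 1 (1 - s))"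

definition Sd :: "real \<Rightarrow> real" where
  "Sd s = (EP (dEP 1) s * EP 1 (1 - s) + EP 1 s * EP (dEP 1) (1 - s)) / (EP 1 s + EP 1 (1 - s))^2"

lemma EP1_pos: "t > 0 \<Longrightarrow> EP 1 t > 0" and EP1_0: "t \<le> 0 \<Longrightarrow> EP 1 t = 0"
  and EP1_nonneg: "EP 1 t \<ge> 0"
  by (auto simp: EP_def)

lemma dEP1: "dEP 1 = [:0,0,1:]" by (simp add: dEP_def)

lemma EPd_nonneg: "EP (dEP 1) t \<ge> 0" and EPd_pos: "t > 0 \<Longrightarrow> EP (dEP 1) t > 0"
  by (auto simp: EP_def dEP1)

lemma den_pos: "EP 1 s + EP 1 (1 - s) > 0"
proof (cases "s > 0")
  case True then show ?thesis using EP1_pos[of s] EP1_nonneg[of "1-s"] by simp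
next
  case False then show ?thesis using EP1_pos[of "1-s"] EP1_nonneg[of s] by simp
qed

lemma Stp_0: "s \<le> 0 \<Longrightarrow> Stp s = 0" by (simp add: Stp_def EP1_0)
lemma Stp_1: "s \<ge> 1 \<Longrightarrow> Stp s = 1"
  using den_pos[of s] by (simp add: Stp_def EP1_0)
lemma Stp_nonneg: "Stp s \<ge> 0"
  using den_pos[of s] EP1_nonneg[of s] by (simp add: Stp_def)

lemma Sd_nonneg: "Sd s \<ge> 0"
  using EP1_nonneg[of s] EP1_nonneg[of "1-s"] EPd_nonneg[of s] EPd_nonneg[of "1-s"]
  by (simp add: Sd_def)

lemma Sd_pos: "0 < s \<Longrightarrow> s < 1 \<Longrightarrow> Sd s > 0"
  using EP1_pos[of s] EP1_pos[of "1-s"] EPd_pos[of s] EPd_pos[of "1-s"] den_pos[of s]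
  by (simp add: Sd_def add_pos_pos)

lemma alg1: "(n::real) + m > 0 \<Longrightarrow> nd * inverse (n+m) + - (inverse (n+m) * (nd + md * -1) * inverse (n+m)) * n = (nd*m + n*md)/(n+m)^2"
proof -
  assume "n + m > 0" then have h: "n + m \<noteq> 0" by simp
  have "nd * inverse (n+m) + - (inverse (n+m) * (nd + md * -1) * inverse (n+m)) * n
     = (nd * (n+m) - n * (nd - md)) / (n+m)^2"
    using h by (simp add: divide_simps power2_eq_square)
  also have "nd * (n+m) - n * (nd - md) = nd*m + n*md" by (simp add: algebra_simps)
  finally show ?thesis .
qed

lemma Stp_deriv: "(Stp has_real_derivative Sd s) (at s)"
proof -
  have N: "(EP 1 has_real_derivative EP (dEP 1) s) (at s)" by (rule EP_deriv)
  have M: "((\<lambda>s. EP 1 (1 - s)) has_real_derivative EP (dEP 1) (1 - s) * (-1)) (at s)"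
    by (rule DERIV_chain2[OF EP_deriv]) (auto intro!: derivative_eq_intros)
  have D: "((\<lambda>s. EP 1 s * inverse (EP 1 s + EP 1 (1 - s))) has_real_derivative
     EP (dEP 1) s * inverse (EP 1 s + EP 1 (1 - s)) +
     - (inverse (EP 1 s + EP 1 (1 - s)) * (EP (dEP 1) s + EP (dEP 1) (1 - s) * (-1)) * inverse (EP 1 s + EP 1 (1 - s))) * EP 1 s) (at s)"
    using den_pos[of s]
    by (intro DERIV_mult N DERIV_inverse' DERIV_add M) auto
  have "EP (dEP 1) s * inverse (EP 1 s + EP 1 (1 - s)) +
     - (inverse (EP 1 s + EP 1 (1 - s)) * (EP (dEP 1) s + EP (dEP 1) (1 - s) * (-1)) * inverse (EP 1 s + EP 1 (1 - s))) * EP 1 s = Sd s"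
    using den_pos[of s] unfolding Sd_def by (rule alg1)
  with D have "((\<lambda>s. EP 1 s * inverse (EP 1 s + EP 1 (1 - s))) has_real_derivative Sd s) (at s)" by simp
  then show ?thesis unfolding Stp_def by simp
qed

lemma EP_isCont: "isCont (EP P) x"
  using EP_deriv by (metis DERIV_isCont)

lemma Sd_cont: "continuous_on UNIV Sd"
proof -
  have c: "isCont (\<lambda>s. EP P (1 - s)) x" for P x
    by (rule isCont_o2[OF _ EP_isCont]) auto
  have "isCont Sd x" for x
    unfolding Sd_def using den_pos[of x]
    by (intro continuous_intros EP_isCont c) auto
  then show ?thesis by (simp add: continuous_at_imp_continuous_on)
qed

lemma salg_Stp: assumes g: "salg g" shows "salg (\<lambda>x. Stp (g x))"
proof -
  have e: "(\<lambda>x. 1 - g x) = (\<lambda>x. 1 + (-1) * g x)" by (simp add: fun_eq_iff)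
  have g1: "salg (\<lambda>x. 1 - g x)" unfolding e by (rule salg.add[OF salg.const salg.mult[OF salg.const g]])
  have h1: "salg (\<lambda>x. EP 1 (g x))" by (rule salg.ep[OF g])
  have h2: "salg (\<lambda>x. EP 1 (1 - g x))" by (rule salg.ep[OF g1])
  have h4: "salg (\<lambda>x. inverse (EP 1 (g x) + EP 1 (1 - g x)))"
  proof (rule salg.inv[OF salg.add[OF h1 h2]], intro allI)
    fix x show "EP 1 (g x) + EP 1 (1 - g x) \<noteq> 0" using den_pos[of "g x"] by linarith
  qed
  show ?thesis unfolding Stp_def by (rule salg.mult[OF h1 h4])
qed


definition chi :: "real \<Rightarrow> real \<Rightarrow> real \<Rightarrow> real" where
  "chi a b t = Stp ((b - t)/(b - a)) * Stp (t + 1)"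
definition psi :: "real \<Rightarrow> 'd::euclidean_space \<Rightarrow> real" where
  "psi R y = Stp (R^2 + 1 - inner y y)"
definition tphi :: "real \<Rightarrow> real \<Rightarrow> real \<Rightarrow> real \<times> 'd::euclidean_space \<Rightarrow> real" where
  "tphi a b R p = chi a b (fst p) * psi R (snd p)"
definition chid :: "real \<Rightarrow> real \<Rightarrow> real \<Rightarrow> real" where
  "chid a b t = - Sd ((b - t)/(b - a)) / (b - a)"

lemma salg_affine: "bounded_linear l \<Longrightarrow> salg (\<lambda>x. c + l x)"
  by (intro salg.add salg.const salg.lin)

lemma tphi_salg: "salg (tphi a b R :: real \<times> 'd::euclidean_space \<Rightarrow> real)"
proof -
  have e1: "(\<lambda>p::real \<times> 'd. (b - fst p)/(b - a)) = (\<lambda>p. b/(b-a) + (- fst p / (b - a)))"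
    by (simp add: fun_eq_iff diff_divide_distrib)
  have h1: "salg (\<lambda>p::real \<times> 'd. (b - fst p)/(b - a))"
    unfolding e1 by (rule salg_affine, rule bounded_linear_compose[OF bounded_linear_divide, of "\<lambda>x. - fst x"], rule bounded_linear_minus[OF bounded_linear_fst])
  have e2: "(\<lambda>p::real \<times> 'd. fst p + 1) = (\<lambda>p. 1 + fst p)" by (simp add: fun_eq_iff)
  have h2: "salg (\<lambda>p::real \<times> 'd. fst p + 1)"
    unfolding e2 by (intro salg_affine bounded_linear_fst)
  have e3: "(\<lambda>p::real \<times> 'd. R^2 + 1 - inner (snd p) (snd p)) = (\<lambda>p. (R^2 + 1) + ((-1) * inner p p + fst p * fst p))"
  proof
    fix p :: "real \<times> 'd"
    show "R^2 + 1 - inner (snd p) (snd p) = (R^2 + 1) + ((-1) * inner p p + fst p * fst p)"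
      by (cases p) simp
  qed
  have h3: "salg (\<lambda>p::real \<times> 'd. R^2 + 1 - inner (snd p) (snd p))"
    unfolding e3 by (rule salg.add[OF salg.const salg.add[OF salg.mult[OF salg.const salg.sq] salg.mult[OF salg.lin[OF bounded_linear_fst] salg.lin[OF bounded_linear_fst]]]])
  have eq: "tphi a b R = (\<lambda>p::real \<times> 'd. Stp ((b - fst p)/(b - a)) * Stp (fst p + 1) * Stp (R^2 + 1 - inner (snd p) (snd p)))"
    by (simp add: fun_eq_iff tphi_def chi_def psi_def)
  show ?thesis unfolding eq
    by (rule salg.mult[OF salg.mult[OF salg_Stp[OF h1] salg_Stp[OF h2]] salg_Stp[OF h3]])
qed

lemma tphi_smooth: "smooth_fun (tphi a b R :: real \<times> 'd::euclidean_space \<Rightarrow> real)"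
  by (rule salg_smooth[OF tphi_salg])

lemma tphi_nonneg: "tphi a b R p \<ge> 0"
  by (simp add: tphi_def chi_def psi_def Stp_nonneg)

lemma Stp_ne0: "Stp s \<noteq> 0 \<Longrightarrow> s > 0"
  by (cases "s \<le> 0") (auto simp: Stp_0)

lemma psi_1: "R \<ge> 0 \<Longrightarrow> norm y \<le> R \<Longrightarrow> psi R y = 1"
proof -
  assume "R \<ge> 0" "norm y \<le> R"
  then have "inner y y \<le> R^2" by (simp add: power_mono flip: power2_norm_eq_inner)
  then show ?thesis unfolding psi_def by (intro Stp_1) simp
qed

lemma tphi_supp:
  assumes ab: "a < b" and R: "R \<ge> 0" and p: "tphi a b R (p::real \<times> 'd::euclidean_space) \<noteq> 0"
  shows "p \<in> {-1..b} \<times> cball 0 (R + 1)"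
proof -
  have s1: "Stp ((b - fst p)/(b - a)) \<noteq> 0" and s2: "Stp (fst p + 1) \<noteq> 0"
    and s3: "Stp (R^2 + 1 - inner (snd p) (snd p)) \<noteq> 0"
    using p unfolding tphi_def chi_def psi_def by simp_all
  have "(b - fst p)/(b - a) > 0" by (rule Stp_ne0[OF s1])
  then have h1: "fst p \<le> b" using ab by (simp add: zero_less_divide_iff)
  have h2: "-1 \<le> fst p" using Stp_ne0[OF s2] by simp
  have h3: "inner (snd p) (snd p) < R^2 + 1" using Stp_ne0[OF s3] by simp
  have "norm (snd p)^2 = inner (snd p) (snd p)" by (simp add: power2_norm_eq_inner)
  also have "\<dots> < R^2 + 1" by (rule h3)
  also have "\<dots> \<le> (R+1)^2" using R by (simp add: power2_eq_square algebra_simps)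
  finally have "norm (snd p)^2 < (R+1)^2" .
  then have "norm (snd p) < R + 1"
    by (rule power_less_imp_less_base) (use R in simp)
  then have "snd p \<in> cball 0 (R + 1)" by simp
  moreover have "fst p \<in> {-1..b}" using h1 h2 by simp
  ultimately show ?thesis by (simp add: mem_Times_iff)
qed

lemma tphi_test:
  assumes ab: "a < b" "b < T" and R: "R \<ge> 0"
  shows "test_fn T (tphi a b R :: real \<times> 'd::euclidean_space \<Rightarrow> real)"
proof -
  let ?S = "{p::real \<times> 'd. tphi a b R p \<noteq> 0}"
  have sub: "?S \<subseteq> {-1..b} \<times> cball 0 (R + 1)" using tphi_supp[OF ab(1) R] by blast
  have cpt: "compact ({-1..b} \<times> cball (0::'d) (R + 1))" by (intro compact_Times) auto
  have "bounded ?S" using sub cpt by (meson bounded_subset compact_imp_bounded)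
  moreover have "closure ?S \<subseteq> {-1..b} \<times> cball 0 (R + 1)"
    using sub cpt by (intro closure_minimal) (auto intro: compact_imp_closed)
  moreover have "{-1..b} \<times> cball (0::'d) (R + 1) \<subseteq> {p. fst p < T}" using ab by auto
  ultimately show ?thesis
    unfolding test_fn_def compact_closure using tphi_smooth[of a b R] tphi_nonneg[of a b R]
    by (intro conjI allI impI) blast+
qed

lemma tphi_deriv:
  fixes p :: "real \<times> 'd::euclidean_space"
  assumes ab: "a < b" and p: "0 < fst p" "norm (snd p) < R"
  shows "(tphi a b R has_derivative (\<lambda>h. chid a b (fst p) * fst h)) (at p)"
proof -
  let ?W = "{q::real \<times> 'd. 0 < fst q \<and> norm (snd q) < R}"
  have "open ?W"
    by (intro open_Collect_conj open_Collect_less continuous_intros)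
  have R: "R \<ge> 0" using p(2) norm_ge_zero[of "snd p"] by linarith
  have eqW: "tphi a b R q = Stp ((b - fst q)/(b - a))" if "q \<in> ?W" for q
    using that R by (simp add: tphi_def chi_def Stp_1 psi_1)
  have g: "((\<lambda>q::real \<times> 'd. (b - fst q)/(b - a)) has_derivative (\<lambda>h. - fst h / (b - a))) (at p)"
    using ab by (auto intro!: derivative_eq_intros)
  have s: "(Stp has_derivative (\<lambda>h. Sd ((b - fst p)/(b - a)) * h)) (at ((b - fst p)/(b - a)))"
    using Stp_deriv by (simp add: has_field_derivative_imp_has_derivative)
  have eqD: "(\<lambda>h. Sd ((b - fst p)/(b - a)) * (- fst h / (b - a))) = (\<lambda>h. chid a b (fst p) * fst h)"
    using ab by (auto simp: fun_eq_iff chid_def)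
  have "((\<lambda>q. Stp ((b - fst q)/(b - a))) has_derivative (\<lambda>h. Sd ((b - fst p)/(b - a)) * (- fst h / (b - a)))) (at p)"
    using has_derivative_compose[OF g s] by (simp only: o_def)
  then have d: "((\<lambda>q. Stp ((b - fst q)/(b - a))) has_derivative (\<lambda>h. chid a b (fst p) * fst h)) (at p)"
    unfolding eqD .
  show ?thesis
  proof (rule has_derivative_transform_within_open[OF d \<open>open ?W\<close>])
    show "p \<in> ?W" using p by simp
    show "\<And>x. x \<in> ?W \<Longrightarrow> Stp ((b - fst x)/(b - a)) = tphi a b R x" using eqW by simp
  qed
qed

lemma chid_nonpos: "a < b \<Longrightarrow> chid a b t \<le> 0"
  using Sd_nonneg by (simp add: chid_def)

lemma chid_neg: "a < b \<Longrightarrow> a < t \<Longrightarrow> t < b \<Longrightarrow> chid a b t < 0"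
  by (simp add: chid_def Sd_pos field_simps)

lemma chid_cont: "a < b \<Longrightarrow> continuous_on UNIV (chid a b)"
  unfolding chid_def
  by (intro continuous_intros continuous_on_compose2[OF Sd_cont]) auto

lemma chid_bounded: "a < b \<Longrightarrow> \<exists>B. \<forall>t\<in>{0..c}. \<bar>chid a b t\<bar> \<le> B"
proof -
  assume "a < b"
  have "compact (chid a b ` {0..c})"
    by (intro compact_continuous_image continuous_on_subset[OF chid_cont[OF \<open>a<b\<close>]]) auto
  then have "bounded (chid a b ` {0..c})" by (rule compact_imp_bounded)
  then obtain B where B: "\<forall>y\<in>chid a b ` {0..c}. norm y \<le> B" unfolding bounded_iff by blast
  show ?thesis
  proof (intro exI ballI)
    fix t assume "t \<in> {0..c}"
    then show "\<bar>chid a b t\<bar> \<le> B" using B by simp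
  qed
qed


lemma minmono: "0 < e \<Longrightarrow> e \<le> t \<Longrightarrow> min (e^2) 1 \<le> min (t^2) (1::real)"
proof -
  assume "0 < e" "e \<le> t"
  then have "e^2 \<le> t^2" by (intro power_mono) auto
  then show ?thesis by linarith
qed

lemma minmono2: "0 < e \<Longrightarrow> ennreal (min (e^2) 1) * indicator {z. e \<le> norm z} z \<le> ennreal (min ((norm z)^2) (1::real))"
proof (cases "e \<le> norm z")
  case True
  assume e: "0 < e"
  have "ennreal (min (e^2) 1) \<le> ennreal (min ((norm z)^2) 1)" by (rule ennreal_leI[OF minmono[OF e True]])
  then show ?thesis using True by (simp add: indicator_def)
qed simp

lemma mu_sigma_finite:
  fixes \<mu> :: "'d::euclidean_space measure"
  assumes s: "sets \<mu> = sets borel" and z: "emeasure \<mu> {0} = 0"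
    and fin: "(\<integral>\<^sup>+ z. ennreal (min ((norm z)\<^sup>2) 1) \<partial>\<mu>) < \<infinity>"
  shows "sigma_finite_measure \<mu>"
proof
  have sp: "space \<mu> = UNIV" using sets_eq_imp_space_eq[OF s] by simp
  have fe: "emeasure \<mu> {z. e \<le> norm z} \<noteq> \<infinity>" if e: "e > 0" for e
  proof -
    have meas: "{z. e \<le> norm z} \<in> sets \<mu>" unfolding s by measurable
    have "ennreal (min (e^2) 1) * emeasure \<mu> {z. e \<le> norm z}
        = (\<integral>\<^sup>+ z. ennreal (min (e^2) 1) * indicator {z. e \<le> norm z} z \<partial>\<mu>)"
      using meas by (simp add: nn_integral_cmult_indicator)
    also have "\<dots> \<le> (\<integral>\<^sup>+ z. ennreal (min ((norm z)\<^sup>2) 1) \<partial>\<mu>)"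
      using e by (intro nn_integral_mono minmono2)
    also have "\<dots> < \<infinity>" by (rule fin)
    finally have "ennreal (min (e^2) 1) * emeasure \<mu> {z. e \<le> norm z} < \<infinity>" .
    moreover have "min (e^2) 1 > 0" using e by simp
    ultimately show ?thesis
      by (auto simp: ennreal_mult_less_top top_unique)
  qed
  let ?A = "insert {0} (range (\<lambda>n::nat. {z::'d. 1 / Suc n \<le> norm z}))"
  show "\<exists>A. countable A \<and> A \<subseteq> sets \<mu> \<and> \<Union> A = space \<mu> \<and> (\<forall>a\<in>A. emeasure \<mu> a \<noteq> \<infinity>)"
  proof (intro exI[of _ ?A] conjI)
    show "countable ?A" by simp
    show "?A \<subseteq> sets \<mu>" unfolding s by auto
    show "\<Union> ?A = space \<mu>"
    proof -
      have "z \<in> \<Union> ?A" for z :: 'd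
      proof (cases "z = 0")
        case False
        then have "0 < norm z" by simp
        then obtain n where n: "inverse (real (Suc n)) < norm z" using reals_Archimedean by blast
        have "1 / real (Suc n) \<le> norm z" using n by (simp add: divide_inverse)
        then have "z \<in> {z::'d. 1 / real (Suc n) \<le> norm z}" by simp
        then show ?thesis by blast
      qed simp
      then show ?thesis unfolding sp by blast
    qed
    show "\<forall>a\<in>?A. emeasure \<mu> a \<noteq> \<infinity>" using z fe by auto
  qed
qed

lemma fubini_shift:
  fixes \<mu> :: "'d::euclidean_space measure" and N :: "(real \<times> 'd) set"
  assumes s: "sets \<mu> = sets borel" and sf: "sigma_finite_measure \<mu>"
    and N: "N \<in> sets borel" "emeasure lborel N = 0"
  shows "AE p in lebesgue. AE z in \<mu>. (fst p, snd p + z) \<notin> N"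
proof -
  interpret pair_sigma_finite lborel \<mu>
    by (intro pair_sigma_finite.intro sf lborel.sigma_finite_measure_axioms)
  have sp: "space \<mu> = UNIV" using sets_eq_imp_space_eq[OF s] by simp
  let ?g = "\<lambda>w::(real \<times> 'd) \<times> 'd. (fst (fst w), snd (fst w) + snd w)"
  have gm: "?g \<in> borel_measurable borel"
    by (intro borel_measurable_continuous_onI continuous_intros)
  have "{w \<in> space (lborel \<Otimes>\<^sub>M \<mu>). ?g w \<notin> N} \<in> sets (lborel \<Otimes>\<^sub>M \<mu>)"
  proof -
    have e: "sets (lborel \<Otimes>\<^sub>M \<mu>) = sets (borel \<Otimes>\<^sub>M borel :: ((real \<times> 'd) \<times> 'd) measure)"
      using s by (intro sets_pair_measure_cong) auto
    have sp2: "space (lborel \<Otimes>\<^sub>M \<mu>) = UNIV" by (simp add: space_pair_measure sp)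
    have "?g -` (- N) \<in> sets (borel :: ((real \<times> 'd) \<times> 'd) measure)"
      using measurable_sets[OF gm, of "- N"] N(1) by (auto simp: Compl_eq_Diff_UNIV)
    then show ?thesis unfolding e borel_prod sp2 by (simp add: vimage_def)
  qed
  moreover have "AE z in \<mu>. AE p in lborel. (fst p, snd p + z) \<notin> N"
  proof (rule AE_I2, rule AE_I')
    fix z :: 'd
    let ?c = "(0::real, z)"
    have cm: "(+) ?c \<in> borel_measurable borel"
      by (rule borel_measurable_continuous_onI) (intro continuous_intros)
    have m: "(+) ?c -` N \<in> sets lborel" using measurable_sets[OF cm N(1)] by simp
    have "emeasure lborel ((+) ?c -` N) = emeasure (distr lborel borel ((+) ?c)) N"
      using N(1) by (subst emeasure_distr) (auto intro!: borel_measurable_continuous_onI continuous_intros)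
    also have "\<dots> = 0" by (simp add: lborel_distr_plus N(2))
    finally show "(+) ?c -` N \<in> null_sets lborel" using m by (simp add: null_sets_def)
    show "{p \<in> space lborel. \<not> (fst p, snd p + z) \<notin> N} \<subseteq> (+) ?c -` N"
      by (auto simp: add.commute)
  qed
  ultimately have "AE p in lborel. AE z in \<mu>. (fst p, snd p + z) \<notin> N"
    using AE_commute[where P="\<lambda>p z. (fst p, snd p + z) \<notin> N"] by simp
  then show ?thesis by (rule AE_completion)
qed


lemma ppart_nonneg: "0 \<le> ppart pos x" by (simp add: ppart_def)
lemma ppart_le: "ppart pos x \<le> \<bar>x\<bar>" by (cases pos) (auto simp: ppart_def)
lemma ppart_cont: "continuous_on UNIV (ppart pos)"
proof (cases pos)
  case True
  have "ppart pos = (\<lambda>x. max x 0)" using True by (simp add: fun_eq_iff ppart_def)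
  then show ?thesis by (simp add: continuous_on_max continuous_on_id continuous_on_const)
next
  case False
  have "ppart pos = (\<lambda>x. max (- x) 0)" using False by (simp add: fun_eq_iff ppart_def)
  then show ?thesis by (simp add: continuous_on_max continuous_on_minus continuous_on_id continuous_on_const)
qed

lemma ppart_zero: "ppart pos x = 0 \<longleftrightarrow> (if pos then x \<le> 0 else 0 \<le> x)"
  by (cases pos) (auto simp: ppart_def max_def)

lemma mono_ppart:
  assumes "mono b" "ppart pos (v - k) = 0" shows "ppart pos (b v - b k) = 0"
proof (cases pos)
  case True
  then have "v \<le> k" using assms(2) by (simp add: ppart_def)
  then have "b v \<le> b k" by (rule monoD[OF assms(1)])
  then show ?thesis using True by (simp add: ppart_def)
next
  case False
  then have "k \<le> v" using assms(2) by (simp add: ppart_def)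
  then have "b k \<le> b v" by (rule monoD[OF assms(1)])
  then show ?thesis using False by (simp add: ppart_def)
qed

lemma sgn_prod:
  assumes "mono b" "ppart pos (w - k) = 0" shows "sgnpm pos (v - k) * (b w - b v) \<le> 0"
proof (cases pos)
  case True
  then have wk: "w \<le> k" using assms(2) by (simp add: ppart_def)
  show ?thesis
  proof (cases "v - k > 0")
    case c: True
    then have "w \<le> v" using wk by simp
    then have "b w \<le> b v" by (rule monoD[OF assms(1)])
    then show ?thesis using True c by (simp add: sgnpm_def)
  qed (use True in \<open>simp add: sgnpm_def\<close>)
next
  case False
  then have wk: "k \<le> w" using assms(2) by (simp add: ppart_def)
  show ?thesis
  proof (cases "v - k < 0")
    case c: True
    then have "v \<le> w" using wk by simp
    then have "b v \<le> b w" by (rule monoD[OF assms(1)])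
    then show ?thesis using False c by (simp add: sgnpm_def)
  qed (use False in \<open>simp add: sgnpm_def\<close>)
qed

lemma sgnpm_nonneg_prod: "sgnpm pos (v - k) * x \<le> 0 \<Longrightarrow> c \<ge> 0 \<Longrightarrow> x * sgnpm pos (v - k) * c \<le> 0"
proof -
  assume a: "sgnpm pos (v - k) * x \<le> 0" "c \<ge> 0"
  have "c * (sgnpm pos (v - k) * x) \<le> 0" by (rule mult_nonneg_nonpos[OF a(2) a(1)])
  then show ?thesis by (simp add: ac_simps)
qed


lemma Llt_zero:
  fixes \<mu> :: "'d::euclidean_space measure"
  assumes r: "r > 0" and x: "norm x < R0" and R: "R = R0 + r" and ab: "a < b"
  shows "Llt \<mu> r (\<lambda>y. tphi a b R (t, y)) x = 0"
proof -
  have R0: "R \<ge> 0" using x r R norm_ge_zero[of x] by linarith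
  have z: "(LINT z:{z. \<epsilon> < norm z \<and> norm z < r}|\<mu>. tphi a b R (t, x + z) - tphi a b R (t, x)) = 0" for \<epsilon>
  proof -
    have "indicator {z. \<epsilon> < norm z \<and> norm z < r} z *\<^sub>R (tphi a b R (t, x + z) - tphi a b R (t, x)) = 0" for z
    proof (cases "norm z < r")
      case True
      have "norm (x + z) \<le> norm x + norm z" by (rule norm_triangle_ineq)
      then have "norm (x + z) \<le> R" using True x R by linarith
      then have "psi R (x + z) = 1" by (rule psi_1[OF R0])
      moreover have "psi R x = 1" using x R r R0 by (intro psi_1) auto
      ultimately show ?thesis by (simp add: tphi_def)
    qed (simp add: indicator_def)
    then have "(\<lambda>z. indicator {z. \<epsilon> < norm z \<and> norm z < r} z *\<^sub>R (tphi a b R (t, x + z) - tphi a b R (t, x))) = (\<lambda>z. 0)"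
      by (rule ext)
    then show ?thesis unfolding set_lebesgue_integral_def by (simp only: integral_zero)
  qed
  have "((\<lambda>\<epsilon>. LINT z:{z. \<epsilon> < norm z \<and> norm z < r}|\<mu>. tphi a b R (t, x + z) - tphi a b R (t, x)) \<longlongrightarrow> 0) (at_right 0)"
    unfolding z by (rule tendsto_const)
  then show ?thesis unfolding Llt_def by (intro tendsto_Lim) simp_all
qed


lemma core:
  fixes \<Omega> :: "'d::euclidean_space set" and T :: real
    and f :: "real \<Rightarrow> 'd" and b :: "real \<Rightarrow> real" and \<mu> :: "'d measure"
    and uc :: "real \<times> 'd \<Rightarrow> real" and u0 :: "'d \<Rightarrow> real" and Lf :: real
    and u :: "real \<times> 'd \<Rightarrow> real"
  assumes \<Omega>o: "open \<Omega>" and \<Omega>b: "bounded \<Omega>" and bm: "mono b"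
    and \<mu>s: "sets \<mu> = sets borel" and \<mu>0: "emeasure \<mu> {0} = 0"
    and \<mu>f: "(\<integral>\<^sup>+ z. ennreal (min ((norm z)\<^sup>2) 1) \<partial>\<mu>) < \<infinity>"
    and sol: "entropy_solution \<Omega> T f b \<mu> uc u0 Lf u"
    and H1: "AE x in lebesgue. x \<in> \<Omega> \<longrightarrow> ppart pos (u0 x - k) = 0"
    and H2: "AE p in lebesgue. p \<in> cylQc T \<Omega> \<longrightarrow> ppart pos (uc p - k) = 0"
    and H3: "\<And>t x. 0 < t \<Longrightarrow> t < T \<Longrightarrow> x \<in> frontier \<Omega> \<Longrightarrow> ppart pos (uc (t, x) - k) = 0"
    and s: "0 < s1" "s1 < s2" "s2 < T"
  shows "AE p in lebesgue. p \<in> cylQ T \<Omega> \<longrightarrow> s1 < fst p \<longrightarrow> fst p < s2 \<longrightarrow> ppart pos (u p - k) = 0"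
proof -
  obtain B0 where B0: "B0 > 0" "\<forall>x\<in>\<Omega>. norm x \<le> B0" using \<Omega>b unfolding bounded_pos by blast
  define R0 where "R0 = B0 + 1"
  have R0: "R0 > 0" "\<And>x. x \<in> \<Omega> \<Longrightarrow> norm x < R0" using B0 unfolding R0_def by auto
  define r where "r = 2 * R0 + 1"
  have r_pos: "r > 0" using R0 unfolding r_def by simp
  define R where "R = R0 + r"
  have R_nn: "R \<ge> 0" using R0 r_pos unfolding R_def by simp
  define \<phi> where "\<phi> = (tphi s1 s2 R :: real \<times> 'd \<Rightarrow> real)"
  have tf: "test_fn T \<phi>" unfolding \<phi>_def by (rule tphi_test[OF s(2) s(3) R_nn])
  have um: "u \<in> borel_measurable borel" using sol unfolding entropy_solution_def by blast
  obtain C where C: "AE p in lebesgue. p \<in> cylM T \<longrightarrow> \<bar>u p\<bar> \<le> C"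
    using sol unfolding entropy_solution_def by blast
  have uuc: "AE p in lebesgue. p \<in> cylQc T \<Omega> \<longrightarrow> u p = uc p"
    using sol unfolding entropy_solution_def by blast
  have ineq: "\<forall>r>0. \<forall>k. \<forall>\<phi>. \<forall>pos.
        test_fn T \<phi> \<and>
        (AE p in lebesgue. p \<in> cylQc T \<Omega> \<longrightarrow> ppart pos (b (uc p) - b k) * \<phi> p = 0) \<longrightarrow>
        - (LINT p:cylQ T \<Omega>|lebesgue.
              ppart pos (u p - k) * frechet_derivative \<phi> (at p) (1, 0)
            + frechet_derivative \<phi> (at p) (0, Fpm pos f (u p) k))
        - (LINT p:cylQ T \<Omega>|lebesgue.
              Lge \<mu> r (\<lambda>y. b (u (fst p, y))) (snd p) * sgnpm pos (u p - k) * \<phi> p)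
        - (LINT p:cylM T|lebesgue.
              ppart pos (b (u p) - b k) * Llt \<mu> r (\<lambda>y. \<phi> (fst p, y)) (snd p))
        \<le> (LINT x:\<Omega>|lebesgue. ppart pos (u0 x - k) * \<phi> (0, x))
          + Lf * (LINT t:{0<..<T}|lborel.
                    (LINT x|surface_measure \<Omega>. ppart pos (uc (t, x) - k) * \<phi> (t, x)))"
    using sol unfolding entropy_solution_def by blast
  have H2u: "AE p in lebesgue. p \<in> cylQc T \<Omega> \<longrightarrow> ppart pos (u p - k) = 0"
    using H2 uuc by eventually_elim auto
  have cond: "AE p in lebesgue. p \<in> cylQc T \<Omega> \<longrightarrow> ppart pos (b (uc p) - b k) * \<phi> p = 0"
    using H2 by eventually_elim (auto simp: mono_ppart[OF bm])
  have key: "- (LINT p:cylQ T \<Omega>|lebesgue.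
              ppart pos (u p - k) * frechet_derivative \<phi> (at p) (1, 0)
            + frechet_derivative \<phi> (at p) (0, Fpm pos f (u p) k))
        - (LINT p:cylQ T \<Omega>|lebesgue.
              Lge \<mu> r (\<lambda>y. b (u (fst p, y))) (snd p) * sgnpm pos (u p - k) * \<phi> p)
        - (LINT p:cylM T|lebesgue.
              ppart pos (b (u p) - b k) * Llt \<mu> r (\<lambda>y. \<phi> (fst p, y)) (snd p))
        \<le> (LINT x:\<Omega>|lebesgue. ppart pos (u0 x - k) * \<phi> (0, x))
          + Lf * (LINT t:{0<..<T}|lborel.
                    (LINT x|surface_measure \<Omega>. ppart pos (uc (t, x) - k) * \<phi> (t, x)))"
    (is "- ?IA - ?IB - ?IC \<le> ?IU + Lf * ?ID")
    using ineq r_pos tf cond by blast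
  have IU: "?IU = 0"
    unfolding set_lebesgue_integral_def
    by (rule integral_eq_zero_AE, rule AE_mp[OF H1]) (auto intro!: AE_I2 simp: indicator_def)
  have ID: "?ID = 0"
  proof -
    have "(LINT x|surface_measure \<Omega>. ppart pos (uc (t, x) - k) * \<phi> (t, x)) = 0" if t: "t \<in> {0<..<T}" for t
    proof (rule integral_eq_zero_AE, rule AE_I2)
      fix x assume "x \<in> space (surface_measure \<Omega>)"
      then have "x \<in> frontier \<Omega>" unfolding surface_measure_def space_measure_of_conv .
      then show "ppart pos (uc (t, x) - k) * \<phi> (t, x) = 0" using H3 t by simp
    qed
    then show ?thesis unfolding set_lebesgue_integral_def
      by (intro integral_eq_zero_AE AE_I2) (simp add: indicator_def)
  qed
  have IC: "?IC = 0"
    unfolding set_lebesgue_integral_def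
  proof (rule integral_eq_zero_AE, rule AE_mp[OF H2u], rule AE_I2, intro impI)
    fix p :: "real \<times> 'd"
    assume h: "p \<in> cylQc T \<Omega> \<longrightarrow> ppart pos (u p - k) = 0"
    show "indicator (cylM T) p *\<^sub>R (ppart pos (b (u p) - b k) * Llt \<mu> r (\<lambda>y. \<phi> (fst p, y)) (snd p)) = 0"
    proof (cases "p \<in> cylM T")
      case True
      show ?thesis
      proof (cases "snd p \<in> \<Omega>")
        case True
        have "Llt \<mu> r (\<lambda>y. \<phi> (fst p, y)) (snd p) = 0"
          unfolding \<phi>_def by (rule Llt_zero[OF r_pos R0(2)[OF True] R_def s(2)])
        then show ?thesis by simp
      next
        case False
        then have "p \<in> cylQc T \<Omega>" using \<open>p \<in> cylM T\<close> by (simp add: cylM_def cylQc_def)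
        then have "ppart pos (b (u p) - b k) = 0" using h mono_ppart[OF bm] by blast
        then show ?thesis by simp
      qed
    qed (simp add: indicator_def)
  qed
  define N where "N = {p::real \<times> 'd. 0 < fst p \<and> fst p < T \<and> snd p \<notin> \<Omega> \<and> ppart pos (u p - k) \<noteq> 0}"
  have pm: "(\<lambda>p. ppart pos (u p - k)) \<in> borel_measurable borel"
  proof -
    have "(\<lambda>p. u p - k) \<in> borel_measurable borel" using um by simp
    then show ?thesis
      using measurable_compose[OF _ borel_measurable_continuous_onI[OF ppart_cont[of pos]]] by blast
  qed
  have Nb: "N \<in> sets borel"
  proof -
    have A1: "{p::real \<times> 'd. 0 < fst p \<and> fst p < T} \<in> sets borel"
      by (rule borel_open) (intro open_Collect_conj open_Collect_less continuous_intros)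
    have e2: "{p::real \<times> 'd. snd p \<notin> \<Omega>} = UNIV \<times> (- \<Omega>)" by auto
    have A2: "{p::real \<times> 'd. snd p \<notin> \<Omega>} \<in> sets borel"
      unfolding e2 by (rule borel_closed, rule closed_Times) (use \<Omega>o in auto)
    have A3: "(\<lambda>p. ppart pos (u p - k)) -` (- {0}) \<inter> space borel \<in> sets borel"
      by (rule measurable_sets[OF pm]) auto
    have "N = {p. 0 < fst p \<and> fst p < T} \<inter> {p. snd p \<notin> \<Omega>} \<inter> ((\<lambda>p. ppart pos (u p - k)) -` (- {0}) \<inter> space borel)"
      unfolding N_def by auto
    then show ?thesis using A1 A2 A3 by simp
  qed
  have N0: "emeasure lborel N = 0"
  proof -
    have "AE p in lborel. p \<in> cylQc T \<Omega> \<longrightarrow> ppart pos (u p - k) = 0"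
      using H2u by (simp add: AE_completion_iff)
    then have "AE p in lborel. p \<notin> N"
      by eventually_elim (auto simp: N_def cylQc_def)
    then have "N \<in> null_sets lborel" using Nb by (simp add: AE_iff_null_sets)
    then show ?thesis by auto
  qed
  have sf: "sigma_finite_measure \<mu>" by (rule mu_sigma_finite[OF \<mu>s \<mu>0 \<mu>f])
  have F: "AE p in lebesgue. AE z in \<mu>. (fst p, snd p + z) \<notin> N"
    by (rule fubini_shift[OF \<mu>s sf Nb N0])
  have Lneg: "Lge \<mu> r (\<lambda>y. b (u (fst p, y))) (snd p) * sgnpm pos (u p - k) \<le> 0"
    if p: "p \<in> cylQ T \<Omega>" and pz: "AE z in \<mu>. (fst p, snd p + z) \<notin> N" for p
  proof -
    let ?c = "sgnpm pos (u p - k)"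
    let ?F = "\<lambda>z. indicator {z. r \<le> norm z} z *\<^sub>R (b (u (fst p, snd p + z)) - b (u (fst p, snd p)))"
    have "AE z in \<mu>. 0 \<le> - (?F z * ?c)"
    proof (rule AE_mp[OF pz], rule AE_I2, intro impI)
      fix z assume zN: "(fst p, snd p + z) \<notin> N"
      show "0 \<le> - (?F z * ?c)"
      proof (cases "r \<le> norm z")
        case True
        have "norm z \<le> norm (snd p + z) + norm (snd p)"
          using norm_triangle_ineq[of "snd p + z" "- snd p"] by simp
        moreover have "norm (snd p) < R0" using p R0(2) by (simp add: cylQ_def)
        ultimately have "norm (snd p + z) \<ge> R0" using True unfolding r_def by linarith
        then have "snd p + z \<notin> \<Omega>" using R0(2) by force
        then have "ppart pos (u (fst p, snd p + z) - k) = 0"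
          using zN p by (auto simp: N_def cylQ_def)
        then have "?c * (b (u (fst p, snd p + z)) - b (u p)) \<le> 0" by (rule sgn_prod[OF bm])
        then show ?thesis using True by (simp add: indicator_def mult.commute)
      qed (simp add: indicator_def)
    qed
    then have "0 \<le> integral\<^sup>L \<mu> (\<lambda>z. - (?F z * ?c))" by (rule integral_nonneg_AE)
    then have "integral\<^sup>L \<mu> ?F * ?c \<le> 0" by simp
    then show ?thesis unfolding Lge_def set_lebesgue_integral_def by simp
  qed
  have IB: "?IB \<le> 0"
  proof -
    have "AE p in lebesgue. 0 \<le> - (indicator (cylQ T \<Omega>) p *\<^sub>R
        (Lge \<mu> r (\<lambda>y. b (u (fst p, y))) (snd p) * sgnpm pos (u p - k) * \<phi> p))"
    proof (rule AE_mp[OF F], rule AE_I2, intro impI)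
      fix p :: "real \<times> 'd" assume pz: "AE z in \<mu>. (fst p, snd p + z) \<notin> N"
      show "0 \<le> - (indicator (cylQ T \<Omega>) p *\<^sub>R
        (Lge \<mu> r (\<lambda>y. b (u (fst p, y))) (snd p) * sgnpm pos (u p - k) * \<phi> p))"
      proof (cases "p \<in> cylQ T \<Omega>")
        case True
        have "Lge \<mu> r (\<lambda>y. b (u (fst p, y))) (snd p) * sgnpm pos (u p - k) * \<phi> p \<le> 0"
          using Lneg[OF True pz] tphi_nonneg[of s1 s2 R p] unfolding \<phi>_def
          by (rule mult_nonpos_nonneg)
        then show ?thesis using True by simp
      qed simp
    qed
    then have "0 \<le> integral\<^sup>L lebesgue (\<lambda>p. - (indicator (cylQ T \<Omega>) p *\<^sub>R
        (Lge \<mu> r (\<lambda>y. b (u (fst p, y))) (snd p) * sgnpm pos (u p - k) * \<phi> p)))"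
      by (rule integral_nonneg_AE)
    then show ?thesis unfolding set_lebesgue_integral_def by simp
  qed
  have fd: "frechet_derivative \<phi> (at p) = (\<lambda>h. chid s1 s2 (fst p) * fst h)" if p: "p \<in> cylQ T \<Omega>" for p
  proof -
    have "0 < fst p" "norm (snd p) < R" using p R0(2)[of "snd p"] r_pos unfolding cylQ_def R_def by auto
    then have "(\<phi> has_derivative (\<lambda>h. chid s1 s2 (fst p) * fst h)) (at p)"
      unfolding \<phi>_def by (rule tphi_deriv[OF s(2)])
    then show ?thesis by (rule frechet_derivative_at[symmetric])
  qed
  define G where "G p = indicator (cylQ T \<Omega>) p * (ppart pos (u p - k) * chid s1 s2 (fst p))" for p
  have IA: "?IA = integral\<^sup>L lebesgue G"
    unfolding set_lebesgue_integral_def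
  proof (rule Bochner_Integration.integral_cong[OF refl])
    fix p :: "real \<times> 'd"
    show "indicator (cylQ T \<Omega>) p *\<^sub>R (ppart pos (u p - k) * frechet_derivative \<phi> (at p) (1, 0)
            + frechet_derivative \<phi> (at p) (0, Fpm pos f (u p) k)) = G p"
      by (cases "p \<in> cylQ T \<Omega>") (simp_all add: fd G_def)
  qed
  have Qopen: "open (cylQ T \<Omega>)"
  proof -
    have "cylQ T \<Omega> = {0<..<T} \<times> \<Omega>" by (auto simp: cylQ_def)
    then show ?thesis using \<Omega>o by (simp add: open_Times)
  qed
  have Qb: "cylQ T \<Omega> \<in> sets borel" by (rule borel_open[OF Qopen])
  obtain Bc where Bc: "\<forall>t\<in>{0..T}. \<bar>chid s1 s2 t\<bar> \<le> Bc" using chid_bounded[OF s(2)] by blast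
  have Gint: "integrable lebesgue G"
  proof (rule integrableI_bounded_set[where A="cylQ T \<Omega>" and B="(C + \<bar>k\<bar>) * Bc"])
    show "cylQ T \<Omega> \<in> sets lebesgue" using Qb by simp
    have "bounded (cylQ T \<Omega>)"
    proof -
      have "cylQ T \<Omega> \<subseteq> {0..T} \<times> \<Omega>" by (auto simp: cylQ_def)
      moreover have "bounded ({0..T} \<times> \<Omega>)" using \<Omega>b by (simp add: bounded_Times)
      ultimately show ?thesis by (rule bounded_subset[rotated])
    qed
    then have "emeasure lborel (cylQ T \<Omega>) < \<infinity>" by (rule emeasure_bounded_finite)
    then show "emeasure lebesgue (cylQ T \<Omega>) < \<infinity>" using Qb by simp
    have cm: "(\<lambda>p::real \<times> 'd. chid s1 s2 (fst p)) \<in> borel_measurable borel"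
      by (rule borel_measurable_continuous_onI, rule continuous_on_compose2[OF chid_cont[OF s(2)]]) (auto intro: continuous_intros)
    have "G \<in> borel_measurable borel"
      unfolding G_def[abs_def]
      by (rule borel_measurable_times[OF borel_measurable_indicator[OF Qb] borel_measurable_times[OF pm cm]])
    then show "G \<in> borel_measurable lebesgue"
      by (intro measurable_completion) simp
    show "AE p in lebesgue. p \<in> cylQ T \<Omega> \<longrightarrow> norm (G p) \<le> (C + \<bar>k\<bar>) * Bc"
    proof (rule AE_mp[OF C], rule AE_I2, intro impI)
      fix p :: "real \<times> 'd" assume h: "p \<in> cylM T \<longrightarrow> \<bar>u p\<bar> \<le> C" and p: "p \<in> cylQ T \<Omega>"
      have "p \<in> cylM T" using p by (simp add: cylM_def cylQ_def)
      then have u: "\<bar>u p\<bar> \<le> C" using h by simp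
      have pp: "ppart pos (u p - k) \<le> C + \<bar>k\<bar>" using ppart_le[of pos "u p - k"] u by linarith
      have ch: "\<bar>chid s1 s2 (fst p)\<bar> \<le> Bc" using Bc p by (simp add: cylQ_def)
      have "norm (G p) = ppart pos (u p - k) * \<bar>chid s1 s2 (fst p)\<bar>"
        using p ppart_nonneg[of pos "u p - k"] by (simp add: G_def abs_mult)
      also have "\<dots> \<le> (C + \<bar>k\<bar>) * Bc"
        by (rule mult_mono[OF pp ch]) (use pp ppart_nonneg[of pos "u p - k"] in simp_all)
      finally show "norm (G p) \<le> (C + \<bar>k\<bar>) * Bc" .
    qed
    show "AE p in lebesgue. p \<notin> cylQ T \<Omega> \<longrightarrow> G p = 0"
      by (rule AE_I2) (simp add: G_def)
  qed
  have Gnp: "G p \<le> 0" for p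
  proof -
    have "ppart pos (u p - k) * chid s1 s2 (fst p) \<le> 0"
      by (rule mult_nonneg_nonpos[OF ppart_nonneg chid_nonpos[OF s(2)]])
    then show ?thesis unfolding G_def by (rule mult_nonneg_nonpos[OF indicator_pos_le])
  qed
  have "integral\<^sup>L lebesgue G \<ge> 0" using key IU ID IC IB IA by simp
  moreover have "0 \<le> integral\<^sup>L lebesgue (\<lambda>p. - G p)"
    by (rule integral_nonneg_AE) (simp add: Gnp)
  ultimately have "integral\<^sup>L lebesgue (\<lambda>p. - G p) = 0" by simp
  then have "AE p in lebesgue. - G p = 0"
    using integral_nonneg_eq_0_iff_AE[of lebesgue "\<lambda>p. - G p"] Gint Gnp by simp
  then show ?thesis
  proof (rule AE_mp, intro AE_I2 impI)
    fix p :: "real \<times> 'd" assume G0: "- G p = 0" and p: "p \<in> cylQ T \<Omega>" and t: "s1 < fst p" "fst p < s2"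
    have "chid s1 s2 (fst p) < 0" by (rule chid_neg[OF s(2) t])
    moreover have "ppart pos (u p - k) * chid s1 s2 (fst p) = 0" using G0 p by (simp add: G_def)
    ultimately show "ppart pos (u p - k) = 0" by simp
  qed
qed


lemma bdry_ext:
  fixes \<Omega> :: "'d::euclidean_space set"
  assumes \<Omega>o: "open \<Omega>" and C2: "C2_boundary \<Omega>" and x: "x \<in> frontier \<Omega>" and B: "open B" "x \<in> B"
  shows "\<exists>W. open W \<and> W \<noteq> {} \<and> W \<subseteq> B \<and> W \<inter> \<Omega> = {}"
proof -
  obtain U \<rho> where U: "open U" "x \<in> U" "C2_on U \<rho>" "\<forall>y\<in>U. y \<in> \<Omega> \<longleftrightarrow> \<rho> y < 0"
    "frechet_derivative \<rho> (at x) \<noteq> (\<lambda>h. 0)"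
    using C2 x unfolding C2_boundary_def by blast
  obtain D :: "'d \<Rightarrow> ('d \<Rightarrow>\<^sub>L real)" where D: "\<forall>y\<in>U. (\<rho> has_derivative blinfun_apply (D y)) (at y)"
    using U(3) unfolding C2_on_def by blast
  have cont: "continuous_on U \<rho>"
    using D by (meson continuous_at_imp_continuous_on has_derivative_continuous)
  have xO: "x \<notin> \<Omega>" using x \<Omega>o by (simp add: frontier_def interior_open)
  then have rx: "\<rho> x \<ge> 0" using U(2,4) by force
  let ?S = "U \<inter> B"
  have So: "open ?S" using U(1) B(1) by blast
  have xS: "x \<in> ?S" using U(2) B(2) by blast
  have "\<exists>y\<in>?S. \<rho> y > 0"
  proof (rule ccontr)
    assume "\<not> (\<exists>y\<in>?S. \<rho> y > 0)"
    then have "\<forall>y\<in>?S. \<rho> y \<le> \<rho> x" using rx by force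
    then have "blinfun_apply (D x) = (\<lambda>v. 0)"
      using differential_zero_maxmin[OF xS So D[rule_format, OF U(2)]] by blast
    moreover have "blinfun_apply (D x) = frechet_derivative \<rho> (at x)"
      by (rule frechet_derivative_at[OF D[rule_format, OF U(2)]])
    ultimately show False using U(5) by simp
  qed
  then obtain y where y: "y \<in> ?S" "\<rho> y > 0" by blast
  let ?W = "\<rho> -` {0<..} \<inter> ?S"
  have "continuous_on ?S \<rho>" using cont by (rule continuous_on_subset) blast
  then have "open ?W" using So by (simp add: continuous_on_open_vimage)
  moreover have "?W \<noteq> {}" using y by blast
  moreover have "?W \<subseteq> B" by blast
  moreover have "?W \<inter> \<Omega> = {}" using U(4) by force
  ultimately show ?thesis by blast
qed

lemma cyl_ext:
  fixes \<Omega> :: "'d::euclidean_space set"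
  assumes \<Omega>o: "open \<Omega>" and C2: "C2_boundary \<Omega>" and t: "0 < t" "t < T" and x: "x \<in> frontier \<Omega>"
    and O: "open Op" "(t, x) \<in> Op"
  shows "\<exists>V. open V \<and> V \<noteq> {} \<and> V \<subseteq> Op \<and> V \<subseteq> cylQc T \<Omega>"
proof -
  obtain A B where AB: "open A" "open B" "(t, x) \<in> A \<times> B" "A \<times> B \<subseteq> Op"
    using open_prod_elim[OF O] by metis
  obtain W where W: "open W" "W \<noteq> {}" "W \<subseteq> B" "W \<inter> \<Omega> = {}"
    using bdry_ext[OF \<Omega>o C2 x AB(2)] AB(3) by auto
  let ?V = "(A \<inter> {0<..<T}) \<times> W"
  have "open ?V" using AB(1) W(1) by (intro open_Times open_Int) auto
  moreover have "?V \<noteq> {}" using AB(3) t W(2) by auto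
  moreover have "?V \<subseteq> Op" using AB(4) W(3) by blast
  moreover have "?V \<subseteq> cylQc T \<Omega>" using W(4) by (auto simp: cylQc_def)
  ultimately show ?thesis by blast
qed

lemma ae_le_cont:
  fixes g :: "'a::euclidean_space \<Rightarrow> real"
  assumes g: "continuous_on UNIV g" and ae: "AE y in lebesgue. y \<in> S \<longrightarrow> g y \<le> c"
    and dens: "\<And>Op. open Op \<Longrightarrow> p \<in> Op \<Longrightarrow> \<exists>V. open V \<and> V \<noteq> {} \<and> V \<subseteq> Op \<and> V \<subseteq> S"
  shows "g p \<le> c"
proof (rule ccontr)
  assume "\<not> g p \<le> c"
  then have pc: "g p > c" by simp
  let ?O = "g -` {c<..}"
  have "open ?O" using g by (simp add: continuous_on_open_vimage[of UNIV, simplified])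
  then obtain V where V: "open V" "V \<noteq> {}" "V \<subseteq> ?O" "V \<subseteq> S" using dens pc by blast
  have "AE y in lebesgue. y \<notin> V"
    using ae by eventually_elim (use V in force)
  then have "AE y in lborel. y \<notin> V" by (simp add: AE_completion_iff)
  moreover have Vs: "V \<in> sets lborel" using V(1) by simp
  ultimately have Vn: "V \<in> null_sets lborel" by (simp add: AE_iff_null_sets)
  obtain z where z: "z \<in> V" using V(2) by blast
  obtain e where e: "e > 0" "ball z e \<subseteq> V" using V(1) z by (meson open_contains_ball)
  have "emeasure lborel (ball z e) \<le> emeasure lborel V" by (rule emeasure_mono[OF e(2) Vs])
  also have "\<dots> = 0" using Vn by auto
  finally have "emeasure lborel (ball z e) = 0" by simp
  then have "measure lborel (ball z e) = 0" by (simp add: measure_def)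
  moreover have "measure lborel (ball z e) > 0" using content_ball_pos[OF e(1)] by simp
  ultimately show False by simp
qed

lemma ess_sup_lt:
  fixes g :: "'a::euclidean_space \<Rightarrow> real"
  assumes "ess_sup_on A g < ereal q"
  shows "AE x in lebesgue. x \<in> A \<longrightarrow> g x \<le> q"
proof -
  obtain z where z: "AE x in lebesgue. x \<in> A \<longrightarrow> ereal (g x) \<le> z" "z < ereal q"
    using assms unfolding ess_sup_on_def Inf_less_iff by blast
  show ?thesis using z(1)
  proof eventually_elim
    case (elim x)
    then show ?case using z(2) by (metis ereal_less_eq(3) less_imp_le order_trans)
  qed
qed

lemma ess_inf_gt:
  fixes g :: "'a::euclidean_space \<Rightarrow> real"
  assumes "ereal q < ess_inf_on A g"
  shows "AE x in lebesgue. x \<in> A \<longrightarrow> q \<le> g x"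
proof -
  obtain z where z: "AE x in lebesgue. x \<in> A \<longrightarrow> z \<le> ereal (g x)" "ereal q < z"
    using assms unfolding ess_inf_on_def less_Sup_iff by blast
  show ?thesis using z(1)
  proof eventually_elim
    case (elim x)
    then show ?case using z(2) by (metis ereal_less_eq(3) less_imp_le order_trans)
  qed
qed


theorem mainTheorem3:
  fixes \<Omega> :: "'d::euclidean_space set" and T :: real
    and f :: "real \<Rightarrow> 'd" and b :: "real \<Rightarrow> real" and \<mu> :: "'d measure"
    and uc :: "real \<times> 'd \<Rightarrow> real" and u0 :: "'d \<Rightarrow> real" and Lf :: real
    and u :: "real \<times> 'd \<Rightarrow> real"
  assumes T: "T > 0"
    and \<Omega>: "open \<Omega>" "bounded \<Omega>" "C2_boundary \<Omega>"
    and f: "loc_lipschitz f"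
    and b: "loc_lipschitz b" "mono b" "deriv_loc_bv b"
    and uc: "C2_on UNIV uc" "bounded (uc ` ({0..T} \<times> UNIV))"
    and u0: "u0 \<in> borel_measurable lebesgue" "\<exists>C. AE x in lebesgue. x \<in> \<Omega> \<longrightarrow> \<bar>u0 x\<bar> \<le> C"
    and \<mu>: "sets \<mu> = sets borel" "emeasure \<mu> {0} = 0"
       "\<forall>A\<in>sets borel. emeasure \<mu> (uminus ` A) = emeasure \<mu> A"
       "(\<integral>\<^sup>+ z. ennreal (min ((norm z)\<^sup>2) 1) \<partial>\<mu>) < \<infinity>"
    and Lf: "\<exists>a c. lipschitz_on Lf {a..c} f \<and>
              (AE x in lebesgue. x \<in> \<Omega> \<longrightarrow> u0 x \<in> {a..c}) \<and>
              (\<forall>p\<in>{0..T} \<times> UNIV. uc p \<in> {a..c}) \<and>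
              (AE p in lebesgue. p \<in> cylM T \<longrightarrow> u p \<in> {a..c})"
    and sol: "entropy_solution \<Omega> T f b \<mu> uc u0 Lf u"
  shows "AE p in lebesgue. p \<in> cylQ T \<Omega> \<longrightarrow>
           min (ess_inf_on \<Omega> u0) (ess_inf_on (cylQc T \<Omega>) uc) \<le> ereal (u p) \<and>
           ereal (u p) \<le> max (ess_sup_on \<Omega> u0) (ess_sup_on (cylQc T \<Omega>) uc)"
proof -
  obtain Duc :: "real \<times> 'd \<Rightarrow> ((real \<times> 'd) \<Rightarrow>\<^sub>L real)" where Duc: "\<forall>x\<in>UNIV. (uc has_derivative blinfun_apply (Duc x)) (at x)"
    using uc(1) unfolding C2_on_def by blast
  have uc_cont: "continuous_on UNIV uc"
    using Duc by (meson continuous_at_imp_continuous_on has_derivative_continuous UNIV_I)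
  have muc_cont: "continuous_on UNIV (\<lambda>y. - uc y)"
    using uc_cont by (rule continuous_on_minus)
  define Mup where "Mup = max (ess_sup_on \<Omega> u0) (ess_sup_on (cylQc T \<Omega>) uc)"
  define Mlo where "Mlo = min (ess_inf_on \<Omega> u0) (ess_inf_on (cylQc T \<Omega>) uc)"
  have up1: "AE p in lebesgue. p \<in> cylQ T \<Omega> \<longrightarrow> of_rat a < fst p \<longrightarrow> fst p < of_rat c \<longrightarrow> u p \<le> of_rat q"
    if cnd: "Mup < ereal (of_rat q)" "0 < (of_rat a :: real)" "(of_rat a :: real) < of_rat c" "(of_rat c :: real) < T"
    for q a c :: rat
  proof -
    let ?k = "of_rat q :: real"
    have "ess_sup_on \<Omega> u0 < ereal ?k" using cnd(1) unfolding Mup_def by simp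
    then have a1: "AE x in lebesgue. x \<in> \<Omega> \<longrightarrow> u0 x \<le> ?k" by (rule ess_sup_lt)
    have h1: "AE x in lebesgue. x \<in> \<Omega> \<longrightarrow> ppart True (u0 x - ?k) = 0"
      using a1 by eventually_elim (simp add: ppart_def)
    have "ess_sup_on (cylQc T \<Omega>) uc < ereal ?k" using cnd(1) unfolding Mup_def by simp
    then have a2: "AE x in lebesgue. x \<in> cylQc T \<Omega> \<longrightarrow> uc x \<le> ?k" by (rule ess_sup_lt)
    have h2: "AE x in lebesgue. x \<in> cylQc T \<Omega> \<longrightarrow> ppart True (uc x - ?k) = 0"
      using a2 by eventually_elim (simp add: ppart_def)
    have h3: "ppart True (uc (t, x) - ?k) = 0" if t: "0 < t" "t < T" and x: "x \<in> frontier \<Omega>" for t x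
    proof -
      have "uc (t, x) \<le> ?k"
        by (rule ae_le_cont[OF uc_cont a2 cyl_ext[OF \<Omega>(1) \<Omega>(3) t x]])
      then show ?thesis by (simp add: ppart_def)
    qed
    have "AE p in lebesgue. p \<in> cylQ T \<Omega> \<longrightarrow> of_rat a < fst p \<longrightarrow> fst p < of_rat c \<longrightarrow> ppart True (u p - ?k) = 0"
      by (rule core[OF \<Omega>(1) \<Omega>(2) b(2) \<mu>(1) \<mu>(2) \<mu>(4) sol h1 h2 h3 cnd(2) cnd(3) cnd(4)])
    then show ?thesis by eventually_elim (auto simp: ppart_def max_def split: if_splits)
  qed
  have lo1: "AE p in lebesgue. p \<in> cylQ T \<Omega> \<longrightarrow> of_rat a < fst p \<longrightarrow> fst p < of_rat c \<longrightarrow> of_rat q \<le> u p"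
    if cnd: "ereal (of_rat q) < Mlo" "0 < (of_rat a :: real)" "(of_rat a :: real) < of_rat c" "(of_rat c :: real) < T"
    for q a c :: rat
  proof -
    let ?k = "of_rat q :: real"
    have "ereal ?k < ess_inf_on \<Omega> u0" using cnd(1) unfolding Mlo_def by simp
    then have a1: "AE x in lebesgue. x \<in> \<Omega> \<longrightarrow> ?k \<le> u0 x" by (rule ess_inf_gt)
    have h1: "AE x in lebesgue. x \<in> \<Omega> \<longrightarrow> ppart False (u0 x - ?k) = 0"
      using a1 by eventually_elim (simp add: ppart_def)
    have "ereal ?k < ess_inf_on (cylQc T \<Omega>) uc" using cnd(1) unfolding Mlo_def by simp
    then have a2: "AE x in lebesgue. x \<in> cylQc T \<Omega> \<longrightarrow> ?k \<le> uc x" by (rule ess_inf_gt)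
    have h2: "AE x in lebesgue. x \<in> cylQc T \<Omega> \<longrightarrow> ppart False (uc x - ?k) = 0"
      using a2 by eventually_elim (simp add: ppart_def)
    have a2': "AE x in lebesgue. x \<in> cylQc T \<Omega> \<longrightarrow> - uc x \<le> - ?k"
      using a2 by eventually_elim simp
    have h3: "ppart False (uc (t, x) - ?k) = 0" if t: "0 < t" "t < T" and x: "x \<in> frontier \<Omega>" for t x
    proof -
      have "- uc (t, x) \<le> - ?k"
        by (rule ae_le_cont[OF muc_cont a2' cyl_ext[OF \<Omega>(1) \<Omega>(3) t x]])
      then show ?thesis by (simp add: ppart_def)
    qed
    have "AE p in lebesgue. p \<in> cylQ T \<Omega> \<longrightarrow> of_rat a < fst p \<longrightarrow> fst p < of_rat c \<longrightarrow> ppart False (u p - ?k) = 0"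
      by (rule core[OF \<Omega>(1) \<Omega>(2) b(2) \<mu>(1) \<mu>(2) \<mu>(4) sol h1 h2 h3 cnd(2) cnd(3) cnd(4)])
    then show ?thesis by eventually_elim (auto simp: ppart_def max_def split: if_splits)
  qed
  have upall: "AE p in lebesgue. \<forall>q a c :: rat.
      (Mup < ereal (of_rat q) \<and> 0 < (of_rat a :: real) \<and> (of_rat a :: real) < of_rat c \<and> (of_rat c :: real) < T) \<longrightarrow>
      (p \<in> cylQ T \<Omega> \<longrightarrow> of_rat a < fst p \<longrightarrow> fst p < of_rat c \<longrightarrow> u p \<le> of_rat q)"
  proof (simp only: AE_all_countable, intro allI)
    fix q a c :: rat
    show "AE p in lebesgue. (Mup < ereal (of_rat q) \<and> 0 < (of_rat a :: real) \<and> (of_rat a :: real) < of_rat c \<and> (of_rat c :: real) < T) \<longrightarrow>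
      (p \<in> cylQ T \<Omega> \<longrightarrow> of_rat a < fst p \<longrightarrow> fst p < of_rat c \<longrightarrow> u p \<le> of_rat q)"
    proof (cases "Mup < ereal (of_rat q) \<and> 0 < (of_rat a :: real) \<and> (of_rat a :: real) < of_rat c \<and> (of_rat c :: real) < T")
      case True
      then have "AE p in lebesgue. p \<in> cylQ T \<Omega> \<longrightarrow> of_rat a < fst p \<longrightarrow> fst p < of_rat c \<longrightarrow> u p \<le> of_rat q"
        by (intro up1) auto
      then show ?thesis by eventually_elim simp
    next
      case False
      show ?thesis by (rule AE_I2) (use False in blast)
    qed
  qed
  have loall: "AE p in lebesgue. \<forall>q a c :: rat.
      (ereal (of_rat q) < Mlo \<and> 0 < (of_rat a :: real) \<and> (of_rat a :: real) < of_rat c \<and> (of_rat c :: real) < T) \<longrightarrow>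
      (p \<in> cylQ T \<Omega> \<longrightarrow> of_rat a < fst p \<longrightarrow> fst p < of_rat c \<longrightarrow> of_rat q \<le> u p)"
  proof (simp only: AE_all_countable, intro allI)
    fix q a c :: rat
    show "AE p in lebesgue. (ereal (of_rat q) < Mlo \<and> 0 < (of_rat a :: real) \<and> (of_rat a :: real) < of_rat c \<and> (of_rat c :: real) < T) \<longrightarrow>
      (p \<in> cylQ T \<Omega> \<longrightarrow> of_rat a < fst p \<longrightarrow> fst p < of_rat c \<longrightarrow> of_rat q \<le> u p)"
    proof (cases "ereal (of_rat q) < Mlo \<and> 0 < (of_rat a :: real) \<and> (of_rat a :: real) < of_rat c \<and> (of_rat c :: real) < T")
      case True
      then have "AE p in lebesgue. p \<in> cylQ T \<Omega> \<longrightarrow> of_rat a < fst p \<longrightarrow> fst p < of_rat c \<longrightarrow> of_rat q \<le> u p"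
        by (intro lo1) auto
      then show ?thesis by eventually_elim simp
    next
      case False
      show ?thesis by (rule AE_I2) (use False in blast)
    qed
  qed
  have times: "\<exists>a c :: rat. 0 < (of_rat a :: real) \<and> (of_rat a :: real) < of_rat c \<and> (of_rat c :: real) < T
      \<and> of_rat a < fst p \<and> fst p < of_rat c" if p: "p \<in> cylQ T \<Omega>" for p :: "real \<times> 'd"
  proof -
    have t: "0 < fst p" "fst p < T" using p by (auto simp: cylQ_def)
    obtain a' where a': "a' \<in> \<rat>" "0 < a'" "a' < fst p" using Rats_dense_in_real[OF t(1)] by blast
    obtain c' where c': "c' \<in> \<rat>" "fst p < c'" "c' < T" using Rats_dense_in_real[OF t(2)] by blast
    obtain a where a: "a' = of_rat a" using a'(1) by (cases rule: Rats_cases) blast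
    obtain c where c: "c' = of_rat c" using c'(1) by (cases rule: Rats_cases) blast
    show ?thesis using a' c' a c by (intro exI[of _ a] exI[of _ c]) auto
  qed
  have upper: "AE p in lebesgue. p \<in> cylQ T \<Omega> \<longrightarrow> ereal (u p) \<le> Mup"
    using upall
  proof eventually_elim
    case (elim p)
    show ?case
    proof (intro impI, rule ccontr)
      assume pQ: "p \<in> cylQ T \<Omega>" and nl: "\<not> ereal (u p) \<le> Mup"
      then have "Mup < ereal (u p)" by simp
      then obtain z where z: "Mup < ereal z" "ereal z < ereal (u p)" using ereal_dense2 by blast
      then have "z < u p" by simp
      then obtain q' where q': "q' \<in> \<rat>" "z < q'" "q' < u p" using Rats_dense_in_real by blast
      obtain q where q: "q' = of_rat q" using q'(1) by (cases rule: Rats_cases) blast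
      obtain a c :: rat where ac: "0 < (of_rat a :: real)" "(of_rat a :: real) < of_rat c" "(of_rat c :: real) < T"
        "of_rat a < fst p" "fst p < of_rat c" using times[OF pQ] by blast
      have "ereal z < ereal (of_rat q)" using q'(2) q by simp
      then have "Mup < ereal (of_rat q)" by (rule less_trans[OF z(1)])
      then have "u p \<le> of_rat q" using elim[THEN spec[of _ q], THEN spec[of _ a], THEN spec[of _ c]] ac pQ by blast
      then show False using q'(3) q by simp
    qed
  qed
  have lower: "AE p in lebesgue. p \<in> cylQ T \<Omega> \<longrightarrow> Mlo \<le> ereal (u p)"
    using loall
  proof eventually_elim
    case (elim p)
    show ?case
    proof (intro impI, rule ccontr)
      assume pQ: "p \<in> cylQ T \<Omega>" and nl: "\<not> Mlo \<le> ereal (u p)"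
      then have "ereal (u p) < Mlo" by simp
      then obtain z where z: "ereal (u p) < ereal z" "ereal z < Mlo" using ereal_dense2 by blast
      then have "u p < z" by simp
      then obtain q' where q': "q' \<in> \<rat>" "u p < q'" "q' < z" using Rats_dense_in_real by blast
      obtain q where q: "q' = of_rat q" using q'(1) by (cases rule: Rats_cases) blast
      obtain a c :: rat where ac: "0 < (of_rat a :: real)" "(of_rat a :: real) < of_rat c" "(of_rat c :: real) < T"
        "of_rat a < fst p" "fst p < of_rat c" using times[OF pQ] by blast
      have "ereal (of_rat q) < ereal z" using q'(3) q by simp
      then have "ereal (of_rat q) < Mlo" using z(2) by (rule less_trans)
      then have "of_rat q \<le> u p" using elim[THEN spec[of _ q], THEN spec[of _ a], THEN spec[of _ c]] ac pQ by blast
      then show False using q'(2) q by simp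
    qed
  qed
  show ?thesis
    using upper lower by eventually_elim (auto simp: Mup_def Mlo_def)
qed

end
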